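(* Let $m\ge1$ and let $\Psi_m(X)=\det(x_{ij})_{1\le i,j\le m}$, viewed as a polynomial in the $m^2$ variables $x_{11},\ldots,x_{mm}$ (i.e. a polynomial on $\mathbb{R}^{m^2}$). Then $\Psi_m$ is an irreducible homogeneous polynomial of degree $m$ which is an eigenfunction of $L$, i.e. $L(\Psi_m)$ is divisible by $\Psi_m$ in $\mathbb{R}[x_{11},\ldots,x_{mm}]$.
   Context: For a polynomial $f$ on $\mathbb{R}^n$ in variables $x_1,\ldots,x_n$, $L(f):=|\nabla f|^2\Delta f-\sum_{i,j=1}^n f_{x_i}f_{x_j}f_{x_ix_j}$. A homogeneous polynomial $f$ is called an eigenfunction of $L$ if $L(f)\equiv 0 \bmod f$, i.e. $L(f)=\lambda f$ for some polynomial $\lambda$. *)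

theory Defs
  imports "HOL-Analysis.Analysis" "HOL-Library.Poly_Mapping" "HOL-Computational_Algebra.Factorial_Ring"
begin

type_synonym 'v rpoly = "('v \<Rightarrow>\<^sub>0 nat) \<Rightarrow>\<^sub>0 real"

definition Var :: "'v \<Rightarrow> 'v rpoly" where
  "Var v = Poly_Mapping.single (Poly_Mapping.single v 1) 1"

definition pdiff :: "'v \<Rightarrow> 'v rpoly \<Rightarrow> 'v rpoly" where
  "pdiff v p = (\<Sum>mon\<in>Poly_Mapping.keys p.
      Poly_Mapping.single (mon - Poly_Mapping.single v 1)
        (of_nat (Poly_Mapping.lookup mon v) * Poly_Mapping.lookup p mon))"

definition mdeg :: "('v::finite \<Rightarrow>\<^sub>0 nat) \<Rightarrow> nat" where
  "mdeg mon = (\<Sum>v\<in>UNIV. Poly_Mapping.lookup mon v)"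

definition homogeneous_of_degree :: "nat \<Rightarrow> 'v::finite rpoly \<Rightarrow> bool" where
  "homogeneous_of_degree d p \<longleftrightarrow> p \<noteq> 0 \<and> (\<forall>mon\<in>Poly_Mapping.keys p. mdeg mon = d)"

definition Lop :: "'v::finite rpoly \<Rightarrow> 'v rpoly" where
  "Lop f = (\<Sum>i\<in>UNIV. pdiff i f ^ 2) * (\<Sum>i\<in>UNIV. pdiff i (pdiff i f))
         - (\<Sum>i\<in>UNIV. \<Sum>j\<in>UNIV. pdiff i f * pdiff j f * pdiff j (pdiff i f))"

text \<open>The determinant polynomial Psi_m in the m^2 variables x_ij, i,j in 'n, m = CARD('n).\<close>
definition Psi :: "('n::finite \<times> 'n) rpoly" where
  "Psi = det ((\<chi> i j. Var (i, j)) :: (('n \<times> 'n) rpoly)^'n^'n)"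

end

theory Submission
  imports Defs
begin

lemma poly_sum_single:
  fixes p :: "'a \<Rightarrow>\<^sub>0 'b::comm_monoid_add"
  shows "p = (\<Sum>a\<in>Poly_Mapping.keys p. Poly_Mapping.single a (Poly_Mapping.lookup p a))"
proof (rule poly_mapping_eqI)
  fix k
  show "Poly_Mapping.lookup p k = Poly_Mapping.lookup (\<Sum>a\<in>Poly_Mapping.keys p. Poly_Mapping.single a (Poly_Mapping.lookup p a)) k"
    unfolding lookup_sum lookup_single
    by (cases "k \<in> Poly_Mapping.keys p") (auto simp: when_def in_keys_iff)
qed

lemma pdiff_eq:
  assumes "finite S" "Poly_Mapping.keys p \<subseteq> S"
  shows "pdiff v p = (\<Sum>mon\<in>S. Poly_Mapping.single (mon - Poly_Mapping.single v 1)
        (of_nat (Poly_Mapping.lookup mon v) * Poly_Mapping.lookup p mon))"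
  unfolding pdiff_def
  by (rule sum.mono_neutral_left) (use assms in \<open>auto simp: in_keys_iff\<close>)

lemma pdiff_add: "pdiff v (p + q) = pdiff v p + pdiff v q"
proof -
  let ?S = "Poly_Mapping.keys p \<union> Poly_Mapping.keys q"
  have f: "finite ?S" by simp
  have s1: "Poly_Mapping.keys p \<subseteq> ?S" and s2: "Poly_Mapping.keys q \<subseteq> ?S" by auto
  have s3: "Poly_Mapping.keys (p + q) \<subseteq> ?S" by (rule keys_add)
  show ?thesis
    unfolding pdiff_eq[OF f s1] pdiff_eq[OF f s2] pdiff_eq[OF f s3]
    by (simp only: lookup_add distrib_left single_add sum.distrib)
qed

lemma pdiff_zero [simp]: "pdiff v 0 = 0"
  by (simp add: pdiff_def)

lemma pdiff_single: "pdiff v (Poly_Mapping.single mon c) =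
   Poly_Mapping.single (mon - Poly_Mapping.single v 1) (of_nat (Poly_Mapping.lookup mon v) * c)"
  by (subst pdiff_eq[of "{mon}"]) auto

lemma pdiff_sum: "pdiff v (sum f A) = (\<Sum>a\<in>A. pdiff v (f a))"
  by (induction A rule: infinite_finite_induct) (auto simp: pdiff_add)

lemma pdiff_uminus: "pdiff v (- p) = - pdiff v p"
  using pdiff_add[of v p "-p"] by (simp add: eq_neg_iff_add_eq_0 add.commute)

lemma pdiff_diff: "pdiff v (p - q) = pdiff v p - pdiff v q"
  using pdiff_add[of v p "-q"] by (simp add: pdiff_uminus)

lemma mon_sub_add:
  fixes a b :: "'v \<Rightarrow>\<^sub>0 nat"
  assumes "Poly_Mapping.lookup a v \<noteq> 0"
  shows "a - Poly_Mapping.single v 1 + b = a + b - Poly_Mapping.single v 1"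
    "b + (a - Poly_Mapping.single v 1) = a + b - Poly_Mapping.single v 1"
  using assms by (auto intro!: poly_mapping_eqI simp: lookup_add lookup_minus lookup_single when_def)

lemma pdiff_mult_single:
  "pdiff v (Poly_Mapping.single a c * Poly_Mapping.single b d) =
   pdiff v (Poly_Mapping.single a c) * Poly_Mapping.single b d + Poly_Mapping.single a c * pdiff v (Poly_Mapping.single b d)"
proof -
  let ?e = "Poly_Mapping.single v (1::nat)"
  have l: "real (Poly_Mapping.lookup (a + b) v) = real (Poly_Mapping.lookup a v) + real (Poly_Mapping.lookup b v)"
    by (simp add: lookup_add)
  have ab: "b + a = a + b" by (rule add.commute)
  have L: "pdiff v (Poly_Mapping.single a c * Poly_Mapping.single b d) =
     Poly_Mapping.single (a + b - ?e) (real (Poly_Mapping.lookup a v) * c * d) +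
     Poly_Mapping.single (a + b - ?e) (real (Poly_Mapping.lookup b v) * c * d)"
    unfolding mult_single pdiff_single l single_add[symmetric] by (simp only: distrib_right distrib_left ac_simps)
  have R1: "pdiff v (Poly_Mapping.single a c) * Poly_Mapping.single b d =
     Poly_Mapping.single (a + b - ?e) (real (Poly_Mapping.lookup a v) * c * d)"
  proof (cases "Poly_Mapping.lookup a v = 0")
    case False
    then show ?thesis unfolding pdiff_single mult_single mon_sub_add(1)[OF False] by (simp only: ac_simps)
  qed (simp only: pdiff_single of_nat_0 mult_zero_left mult_zero_right single_zero)
  have R2: "Poly_Mapping.single a c * pdiff v (Poly_Mapping.single b d) =
     Poly_Mapping.single (a + b - ?e) (real (Poly_Mapping.lookup b v) * c * d)"
  proof (cases "Poly_Mapping.lookup b v = 0")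
    case False
    then show ?thesis unfolding pdiff_single mult_single mon_sub_add(2)[OF False] ab
      by (simp only: ac_simps)
  qed (simp only: pdiff_single of_nat_0 mult_zero_left mult_zero_right single_zero)
  show ?thesis unfolding L R1 R2 ..
qed

lemma pdiff_mult: "pdiff v (p * q) = pdiff v p * q + p * pdiff v q"
proof -
  define P where "P = (\<Sum>a\<in>Poly_Mapping.keys p. Poly_Mapping.single a (Poly_Mapping.lookup p a))"
  define Q where "Q = (\<Sum>b\<in>Poly_Mapping.keys q. Poly_Mapping.single b (Poly_Mapping.lookup q b))"
  have pP: "p = P" unfolding P_def by (rule poly_sum_single)
  have qQ: "q = Q" unfolding Q_def by (rule poly_sum_single)
  have "pdiff v (P * Q) = (\<Sum>a\<in>Poly_Mapping.keys p. \<Sum>b\<in>Poly_Mapping.keys q.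
      pdiff v (Poly_Mapping.single a (Poly_Mapping.lookup p a) * Poly_Mapping.single b (Poly_Mapping.lookup q b)))"
    unfolding P_def Q_def sum_product pdiff_sum by (rule refl)
  also have "\<dots> = pdiff v P * Q + P * pdiff v Q"
    unfolding P_def Q_def pdiff_sum sum_product distrib_right
    by (simp only: pdiff_mult_single sum.distrib)
  finally show ?thesis unfolding pP qQ .
qed

lemma pdiff_const: "pdiff v (Poly_Mapping.single 0 c) = 0"
  by (simp add: pdiff_single)

lemma pdiff_one [simp]: "pdiff v 1 = 0"
  by (metis pdiff_const single_one)

lemma pdiff_of_int [simp]: "pdiff v (of_int k) = 0"
  by (metis pdiff_const single_of_int)

lemma pdiff_Var: "pdiff v (Var w) = (if v = w then 1 else 0)"
proof (cases "v = w")
  case True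
  then show ?thesis by (simp add: Var_def pdiff_single)
next
  case False
  then show ?thesis by (simp add: Var_def pdiff_single lookup_single_not_eq)
qed

lemma pdiff_prod: "pdiff v (\<Prod>i\<in>A. f i) = (\<Sum>i\<in>A. pdiff v (f i) * (\<Prod>j\<in>A-{i}. f j))"
proof (induction A rule: infinite_finite_induct)
  case (insert x F)
  have e: "\<And>i. i \<in> F \<Longrightarrow> prod f (insert x F - {i}) = f x * prod f (F - {i})"
  proof -
    fix i assume i: "i \<in> F"
    have "insert x F - {i} = insert x (F - {i})" using i insert(2) by blast
    moreover have "x \<notin> F - {i}" using insert(2) by blast
    ultimately show "prod f (insert x F - {i}) = f x * prod f (F - {i})"
      using insert(1) by simp
  qed
  have s1: "(\<Sum>i\<in>insert x F. pdiff v (f i) * prod f (insert x F - {i}))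
     = pdiff v (f x) * prod f F + (\<Sum>i\<in>F. pdiff v (f i) * prod f (insert x F - {i}))"
    using insert by (simp add: sum.insert)
  also have "(\<Sum>i\<in>F. pdiff v (f i) * prod f (insert x F - {i})) = f x * (\<Sum>i\<in>F. pdiff v (f i) * prod f (F - {i}))"
    by (simp add: e sum_distrib_left mult.left_commute cong: sum.cong)
  finally show ?case using insert by (simp add: pdiff_mult)
qed auto

definition rowrep :: "'a^'n^'m \<Rightarrow> 'm \<Rightarrow> 'a^'n \<Rightarrow> 'a^'n^'m" where
  "rowrep M a r = (\<chi> i. if i = a then r else M$i)"

definition ev :: "'n \<Rightarrow> 'a::zero_neq_one^'n" where
  "ev b = (\<chi> j. if j = b then 1 else 0)"

lemma rowrep_nth [simp]: "rowrep M a r $ i = (if i = a then r else M$i)"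
  by (simp add: rowrep_def)

lemma ev_nth [simp]: "ev b $ j = (if j = b then 1 else 0)"
  by (simp add: ev_def)

lemma pdiff_det:
  fixes M :: "('v rpoly)^'n::finite^'n"
  shows "pdiff v (det M) = (\<Sum>i\<in>UNIV. det (rowrep M i (\<chi> j. pdiff v (M$i$j))))"
proof -
  have "pdiff v (det M) = (\<Sum>p\<in>{p. p permutes (UNIV::'n set)}. of_int (sign p) *
      (\<Sum>i\<in>UNIV. pdiff v (M$i$p i) * (\<Prod>j\<in>UNIV-{i}. M$j$p j)))"
    unfolding det_def pdiff_sum pdiff_mult pdiff_prod by simp
  also have "\<dots> = (\<Sum>p\<in>{p. p permutes (UNIV::'n set)}. \<Sum>i\<in>UNIV. of_int (sign p) *
      (\<Prod>j\<in>UNIV. rowrep M i (\<chi> j. pdiff v (M$i$j)) $ j $ p j))"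
  proof -
    have "(\<Prod>j\<in>UNIV. rowrep M i (\<chi> j. pdiff v (M$i$j)) $ j $ p j) =
      pdiff v (M$i$p i) * (\<Prod>j\<in>UNIV-{i}. M$j$p j)" for p i
    proof -
      have "(\<Prod>j\<in>UNIV. rowrep M i (\<chi> j. pdiff v (M$i$j)) $ j $ p j) =
        rowrep M i (\<chi> j. pdiff v (M$i$j)) $ i $ p i * (\<Prod>j\<in>UNIV-{i}. rowrep M i (\<chi> j. pdiff v (M$i$j)) $ j $ p j)"
        by (rule prod.remove) auto
      also have "\<dots> = pdiff v (M$i$p i) * (\<Prod>j\<in>UNIV-{i}. M$j$p j)"
        by (intro arg_cong2[where f=times] prod.cong) auto
      finally show ?thesis .
    qed
    then show ?thesis by (simp add: sum_distrib_left)
  qed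
  also have "\<dots> = (\<Sum>i\<in>UNIV. det (rowrep M i (\<chi> j. pdiff v (M$i$j))))"
    unfolding det_def by (rule sum.swap)
  finally show ?thesis .
qed

lemma det_rowrep_zero: "det (rowrep (M::'a::comm_ring_1^'n::finite^'n) a 0) = 0"
  using det_row_0[of a "\<lambda>i. M$i"] by (simp add: rowrep_def)

lemma rowrep_self [simp]: "rowrep M a (M$a) = M"
  by (simp add: rowrep_def vec_eq_iff)

lemma det_rowrep_identical:
  "a \<noteq> k \<Longrightarrow> det (rowrep (M::'a::comm_ring_1^'n::finite^'n) a (M$k)) = 0"
  by (rule det_identical_rows[of a k]) (auto simp: row_def vec_eq_iff)

lemma rowrep_rowrep_same [simp]: "rowrep (rowrep M a r) a s = rowrep M a s"
  by (simp add: rowrep_def vec_eq_iff)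

lemma det_rowrep_lin:
  fixes M :: "'a::comm_ring_1^'n::finite^'n"
  shows "(\<Sum>j\<in>UNIV. r$j * det (rowrep M a (ev j))) = det (rowrep M a r)"
proof -
  have r: "r = (\<Sum>j\<in>UNIV. r$j *s ev j)"
    by (simp add: vec_eq_iff sum_component ev_def if_distrib cong: if_cong)
  have "det (rowrep M a r) = det (\<chi> i. if i = a then (\<Sum>j\<in>UNIV. r$j *s ev j) else M$i)"
    by (subst r) (simp add: rowrep_def)
  also have "\<dots> = (\<Sum>j\<in>UNIV. det (\<chi> i. if i = a then r$j *s ev j else M$i))"
    by (rule det_linear_row_sum) simp
  also have "\<dots> = (\<Sum>j\<in>UNIV. r$j * det (rowrep M a (ev j)))"
    by (simp add: det_row_mul rowrep_def)
  finally show ?thesis by simp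
qed

lemma det_rowrep_swap:
  fixes M :: "'a::comm_ring_1^'n::finite^'n"
  assumes "a \<noteq> c"
  shows "det (rowrep (rowrep M a r) c s) = - det (rowrep (rowrep M a s) c r)"
proof -
  let ?t = "Transposition.transpose a c"
  have "(\<chi> i. rowrep (rowrep M a s) c r $ ?t i) = rowrep (rowrep M a r) c s"
    using assms by (auto simp: vec_eq_iff Transposition.transpose_def)
  moreover have "det (\<chi> i. rowrep (rowrep M a s) c r $ ?t i) = of_int (sign ?t) * det (rowrep (rowrep M a s) c r)"
    by (rule det_permute_rows) (simp add: permutes_swap_id)
  ultimately show ?thesis using assms by (simp add: sign_swap_id)
qed

definition Xm :: "(('n::finite \<times> 'n) rpoly)^'n^'n" where
  "Xm = (\<chi> i j. Var (i, j))"

definition XTm :: "(('n::finite \<times> 'n) rpoly)^'n^'n" where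
  "XTm = (\<chi> i j. Var (j, i))"

lemma Psi_Xm: "Psi = det Xm"
  by (simp add: Psi_def Xm_def)

lemma Psi_XTm: "Psi = det (XTm :: (('n::finite \<times> 'n) rpoly)^'n^'n)"
proof -
  have "XTm = Finite_Cartesian_Product.transpose (Xm :: (('n \<times> 'n) rpoly)^'n^'n)"
    by (simp add: XTm_def Xm_def Finite_Cartesian_Product.transpose_def)
  then show ?thesis by (metis Psi_Xm det_transpose)
qed

lemma pdiff_det_var:
  fixes \<phi> :: "'n::finite \<Rightarrow> 'n \<Rightarrow> 'v"
  assumes inj: "\<And>i j k l. \<phi> i j = \<phi> k l \<longleftrightarrow> i = k \<and> j = l"
  shows "pdiff (\<phi> a b) (det ((\<chi> i j. Var (\<phi> i j)) :: ('v rpoly)^'n^'n)) =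
     det (rowrep ((\<chi> i j. Var (\<phi> i j)) :: ('v rpoly)^'n^'n) a (ev b))"
proof -
  let ?M = "(\<chi> i j. Var (\<phi> i j)) :: ('v rpoly)^'n^'n"
  have r: "(\<chi> j. pdiff (\<phi> a b) (?M$i$j)) = (if i = a then ev b else 0)" for i
    by (auto simp: vec_eq_iff pdiff_Var inj)
  have "pdiff (\<phi> a b) (det ?M) = (\<Sum>i\<in>UNIV. if i = a then det (rowrep ?M a (ev b)) else 0)"
    unfolding pdiff_det r by (intro sum.cong refl) (auto simp: det_rowrep_zero)
  also have "\<dots> = det (rowrep ?M a (ev b))" by simp
  finally show ?thesis .
qed

definition Fm :: "'n \<Rightarrow> 'n \<Rightarrow> ('n::finite \<times> 'n) rpoly" where
  "Fm a b = det (rowrep Xm a (ev b))"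

definition Km :: "'n \<Rightarrow> 'n \<Rightarrow> 'n \<Rightarrow> 'n \<Rightarrow> ('n::finite \<times> 'n) rpoly" where
  "Km a b c d = det (rowrep (rowrep Xm a (ev b)) c (ev d))"

lemma dPsi: "pdiff (a, b) Psi = Fm a b"
  using pdiff_det_var[of "\<lambda>i j. (i, j)" a b] by (simp add: Psi_Xm Xm_def Fm_def)

lemma dPsi_T: "pdiff (a, b) (Psi :: ('n::finite \<times> 'n) rpoly) = det (rowrep (XTm :: (('n \<times> 'n) rpoly)^'n^'n) b (ev a))"
  using pdiff_det_var[of "\<lambda>i j. (j, i)" b a] by (auto simp: Psi_XTm XTm_def)

lemma pdiff_ev: "pdiff v ((ev b :: ('v rpoly)^'n) $ j) = 0"
  by (simp add: pdiff_Var)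

lemma ddPsi:
  fixes a b c d :: "'n::finite"
  shows "pdiff (c, d) (pdiff (a, b) Psi) = (if c = a then 0 else Km a b c d)"
proof -
  let ?M = "rowrep Xm a (ev b) :: (('n \<times> 'n) rpoly)^'n^'n"
  have r: "(\<chi> j. pdiff (c, d) (?M$i$j)) = (if i = a then 0 else if i = c then ev d else 0)" for i
    by (auto simp: vec_eq_iff pdiff_Var Xm_def)
  have "pdiff (c, d) (det ?M) = (\<Sum>i\<in>UNIV. if i = c \<and> c \<noteq> a then Km a b c d else 0)"
    unfolding pdiff_det r by (intro sum.cong refl) (auto simp: det_rowrep_zero Km_def)
  also have "\<dots> = (if c = a then 0 else Km a b c d)" by simp
  finally show ?thesis by (simp add: dPsi Fm_def)
qed

lemma lapR:
  fixes a b i k :: "'n::finite"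
  assumes "a \<noteq> i"
  shows "(\<Sum>j\<in>UNIV. Xm$k$j * Km a b i j) = (if k = i then Fm a b else if k = a then - Fm i b else 0)"
proof -
  let ?M = "rowrep Xm a (ev b) :: (('n \<times> 'n) rpoly)^'n^'n"
  have "(\<Sum>j\<in>UNIV. Xm$k$j * Km a b i j) = det (rowrep ?M i (Xm$k))"
    unfolding Km_def by (rule det_rowrep_lin)
  also have "\<dots> = (if k = i then Fm a b else if k = a then - Fm i b else 0)"
  proof (cases "k = i")
    case True
    have "rowrep ?M i (Xm$k) = ?M" using True assms by (simp add: rowrep_def vec_eq_iff)
    then show ?thesis using True by (simp add: Fm_def)
  next
    case False
    show ?thesis
    proof (cases "k = a")
      case True
      have "det (rowrep ?M i (Xm$k)) = - det (rowrep (rowrep Xm a (Xm$a)) i (ev b))"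
        using True assms by (simp add: det_rowrep_swap)
      then show ?thesis using True False by (simp add: Fm_def)
    next
      case ka: False
      have "?M$k = Xm$k" using ka by simp
      then have "det (rowrep ?M i (Xm$k)) = 0"
        using det_rowrep_identical[of i k ?M] False by metis
      then show ?thesis using False ka by simp
    qed
  qed
  finally show ?thesis .
qed

lemma lapC:
  fixes j j' :: "'n::finite"
  shows   "(\<Sum>k\<in>UNIV. Fm k j' * Xm$k$j) = (if j = j' then Psi else 0)"
proof -
  let ?T = "XTm :: (('n \<times> 'n) rpoly)^'n^'n"
  have "(\<Sum>k\<in>UNIV. Fm k j' * Xm$k$j) = (\<Sum>k\<in>UNIV. ?T$j$k * det (rowrep ?T j' (ev k)))"
  proof (intro sum.cong refl)
    fix k
    have e: "Fm k j' = det (rowrep ?T j' (ev k))" using dPsi_T[of k j'] dPsi[of k j'] by simp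
    have f: "?T$j$k = Xm$k$j" by (simp add: XTm_def Xm_def)
    show "Fm k j' * Xm$k$j = ?T$j$k * det (rowrep ?T j' (ev k))" by (simp only: e f mult.commute)
  qed
  also have "\<dots> = det (rowrep ?T j' (?T$j))" by (rule det_rowrep_lin)
  also have "\<dots> = (if j = j' then Psi else 0)"
    by (auto simp: Psi_XTm det_rowrep_identical)
  finally show ?thesis .
qed

lemma desnanot:
  fixes a b i j' :: "'n::finite"
  assumes "a \<noteq> i"
  shows "Psi * Km a b i j' = Fm i j' * Fm a b - Fm a j' * Fm i b"
proof -
  have "(\<Sum>k\<in>UNIV. \<Sum>j\<in>UNIV. Fm k j' * Xm$k$j * Km a b i j) =
     (\<Sum>k\<in>UNIV. Fm k j' * (if k = i then Fm a b else if k = a then - Fm i b else 0))"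
    by (simp add: lapR[OF assms] sum_distrib_left mult.assoc flip: lapR[OF assms])
  also have "\<dots> = Fm i j' * Fm a b - Fm a j' * Fm i b"
    using assms by (simp add: if_distrib sum.If_cases)
  finally have 1: "(\<Sum>k\<in>UNIV. \<Sum>j\<in>UNIV. Fm k j' * Xm$k$j * Km a b i j) = Fm i j' * Fm a b - Fm a j' * Fm i b" .
  have "(\<Sum>k\<in>UNIV. \<Sum>j\<in>UNIV. Fm k j' * Xm$k$j * Km a b i j) =
     (\<Sum>j\<in>UNIV. (\<Sum>k\<in>UNIV. Fm k j' * Xm$k$j) * Km a b i j)"
    by (subst sum.swap) (simp add: sum_distrib_right)
  also have "\<dots> = Psi * Km a b i j'"
    by (simp add: lapC if_distrib[where f="\<lambda>x. x * _"] cong: if_cong)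
  finally show ?thesis using 1 by simp
qed

definition sig :: "('n \<times> 'n) \<times> ('n \<times> 'n) \<Rightarrow> ('n \<times> 'n) \<times> ('n \<times> 'n)" where
  "sig p = (case p of ((a, b), (c, d)) \<Rightarrow> ((a, d), (c, b)))"

lemma sig_sig [simp]: "sig (sig p) = p"
  by (cases p) (auto simp: sig_def)

definition Gp :: "('n::finite \<times> 'n) \<times> ('n \<times> 'n) \<Rightarrow> ('n \<times> 'n) rpoly" where
  "Gp p = pdiff (snd p) (pdiff (fst p) Psi)"

lemma Gp_sig: "Gp (sig p) = - Gp p"
proof -
  obtain a b c d where p: "p = ((a, b), (c, d))" by (metis prod.exhaust)
  show ?thesis
  proof (cases "c = a")
    case False
    then have "Km a d c b = - Km a b c d"
      unfolding Km_def by (rule det_rowrep_swap[OF not_sym])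
    then show ?thesis using False by (simp add: p sig_def Gp_def ddPsi)
  qed (simp add: p sig_def Gp_def ddPsi)
qed

lemma ddPsi': "pdiff (c, d) (Fm a b) = (if c = a then 0 else Km a b c d)"
  using ddPsi[of c d a b] by (simp add: dPsi)

lemma Gp_dn: "pdiff (fst p) Psi * pdiff (snd p) Psi =
   Psi * Gp p + pdiff (fst (sig p)) Psi * pdiff (snd (sig p)) Psi"
proof -
  obtain a b c d where p: "p = ((a, b), (c, d))" by (metis prod.exhaust)
  show ?thesis
  proof (cases "c = a")
    case False
    then show ?thesis using desnanot[of a c b d] False
      by (simp add: p sig_def Gp_def ddPsi' dPsi algebra_simps)
  qed (simp add: p sig_def Gp_def ddPsi' dPsi algebra_simps)
qed

lemma lap_zero: "(\<Sum>i\<in>UNIV. pdiff i (pdiff i (Psi :: ('n::finite \<times> 'n) rpoly))) = 0"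
proof (rule sum.neutral, rule ballI)
  fix i :: "'n \<times> 'n"
  show "pdiff i (pdiff i Psi) = 0" by (cases i) (simp add: ddPsi)
qed

lemma half_two: "Poly_Mapping.single 0 (1/2) * (2 :: 'v rpoly) = 1"
proof -
  have "(2 :: 'v rpoly) = Poly_Mapping.single 0 2"
    by (metis single_of_nat of_nat_numeral)
  show ?thesis unfolding \<open>(2 :: 'v rpoly) = Poly_Mapping.single 0 2\<close> mult_single by simp
qed

lemma Lop_Psi_dvd: "(Psi :: ('n::finite \<times> 'n) rpoly) dvd Lop Psi"
proof -
  let ?F = "\<lambda>i. pdiff i (Psi :: ('n \<times> 'n) rpoly)"
  let ?U = "UNIV :: (('n \<times> 'n) \<times> ('n \<times> 'n)) set"
  define H where "H = (\<Sum>i\<in>UNIV. \<Sum>j\<in>UNIV. ?F i * ?F j * pdiff j (pdiff i (Psi :: ('n \<times> 'n) rpoly)))"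
  define S where "S = (\<Sum>p\<in>?U. Gp p * Gp p)"
  have H2: "H = (\<Sum>p\<in>?U. ?F (fst p) * ?F (snd p) * Gp p)"
    unfolding H_def Gp_def by (simp add: sum.cartesian_product case_prod_beta)
  also have "\<dots> = (\<Sum>p\<in>?U. (Psi * Gp p + ?F (fst (sig p)) * ?F (snd (sig p))) * Gp p)"
    by (intro sum.cong refl arg_cong2[where f=times] Gp_dn)
  also have "\<dots> = Psi * S + (\<Sum>p\<in>?U. ?F (fst (sig p)) * ?F (snd (sig p)) * Gp p)"
    by (simp add: S_def distrib_right sum.distrib sum_distrib_left mult.assoc)
  also have "(\<Sum>p\<in>?U. ?F (fst (sig p)) * ?F (snd (sig p)) * Gp p) =
      (\<Sum>p\<in>?U. ?F (fst p) * ?F (snd p) * Gp (sig p))"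
    by (rule sum.reindex_bij_witness[of _ sig sig]) auto
  also have "\<dots> = - H"
    unfolding H2 Gp_sig by (simp add: sum_negf)
  finally have "H = Psi * S - H" by simp
  then have "2 * H = Psi * S" by (simp add: algebra_simps)
  then have "Poly_Mapping.single 0 (1/2) * (2 * H) = Poly_Mapping.single 0 (1/2) * (Psi * S)" by simp
  then have HH: "H = Psi * (Poly_Mapping.single 0 (1/2) * S)"
    by (simp only: mult.assoc[symmetric] half_two mult_1_left) (simp add: ac_simps)
  have "Lop Psi = - H"
    unfolding Lop_def H_def lap_zero by simp
  then show ?thesis using HH by (metis dvd_minus_iff dvd_triv_left)
qed

definition wdeg :: "('v::finite \<Rightarrow> nat) \<Rightarrow> ('v \<Rightarrow>\<^sub>0 nat) \<Rightarrow> nat" where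
  "wdeg w m = (\<Sum>v\<in>UNIV. w v * Poly_Mapping.lookup m v)"

lemma wdeg_add: "wdeg w (a + b) = wdeg w a + wdeg w b"
  by (simp add: wdeg_def lookup_add distrib_left sum.distrib)

lemma wdeg_zero [simp]: "wdeg w 0 = 0"
  by (simp add: wdeg_def)

definition part :: "('v::finite \<Rightarrow> nat) \<Rightarrow> nat \<Rightarrow> 'v rpoly \<Rightarrow> 'v rpoly" where
  "part w k p = Abs_poly_mapping (\<lambda>m. if wdeg w m = k then Poly_Mapping.lookup p m else 0)"

lemma lookup_part: "Poly_Mapping.lookup (part w k p) m = (if wdeg w m = k then Poly_Mapping.lookup p m else 0)"
proof -
  have "finite {m. (if wdeg w m = k then Poly_Mapping.lookup p m else 0) \<noteq> 0}"
    using finite_lookup[of p] by (rule rev_finite_subset) (simp add: Collect_mono)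
  then show ?thesis unfolding part_def by simp
qed

lemma keys_part: "Poly_Mapping.keys (part w k p) = {m\<in>Poly_Mapping.keys p. wdeg w m = k}"
  by (auto simp: in_keys_iff lookup_part split: if_splits)

lemma part_add: "part w k (p + q) = part w k p + part w k q"
  by (rule poly_mapping_eqI) (simp add: lookup_part lookup_add)

lemma part_self: "(\<And>m. m \<in> Poly_Mapping.keys p \<Longrightarrow> wdeg w m = k) \<Longrightarrow> part w k p = p"
  by (rule poly_mapping_eqI) (auto simp: lookup_part in_keys_iff)

lemma part_none: "(\<And>m. m \<in> Poly_Mapping.keys p \<Longrightarrow> wdeg w m \<noteq> k) \<Longrightarrow> part w k p = 0"
  by (rule poly_mapping_eqI) (auto simp: lookup_part in_keys_iff)

lemma keys_mult_wdeg:
  assumes "m \<in> Poly_Mapping.keys (p * q)"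
  obtains a b where "a \<in> Poly_Mapping.keys p" "b \<in> Poly_Mapping.keys q" "wdeg w m = wdeg w a + wdeg w b"
  using keys_mult[of p q] assms wdeg_add by blast

lemma part_mult_top:
  fixes p q :: "'v::finite rpoly"
  assumes p: "\<And>m. m \<in> Poly_Mapping.keys p \<Longrightarrow> wdeg w m \<le> s"
    and q: "\<And>m. m \<in> Poly_Mapping.keys q \<Longrightarrow> wdeg w m \<le> t"
  shows "part w (s + t) (p * q) = part w s p * part w t q"
proof -
  define P where "P = part w s p"
  define Q where "Q = part w t q"
  define p' where "p' = p - P"
  define q' where "q' = q - Q"
  have lp': "Poly_Mapping.lookup p' m = (if wdeg w m = s then 0 else Poly_Mapping.lookup p m)" for m
    by (simp add: p'_def P_def lookup_minus lookup_part)
  have lq': "Poly_Mapping.lookup q' m = (if wdeg w m = t then 0 else Poly_Mapping.lookup q m)" for m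
    by (simp add: q'_def Q_def lookup_minus lookup_part)
  have kp': "wdeg w m < s" if "m \<in> Poly_Mapping.keys p'" for m
  proof -
    have "m \<in> Poly_Mapping.keys p" "wdeg w m \<noteq> s" using that by (auto simp: in_keys_iff lp' split: if_splits)
    then show ?thesis using p by force
  qed
  have kq': "wdeg w m < t" if "m \<in> Poly_Mapping.keys q'" for m
  proof -
    have "m \<in> Poly_Mapping.keys q" "wdeg w m \<noteq> t" using that by (auto simp: in_keys_iff lq' split: if_splits)
    then show ?thesis using q by force
  qed
  have kP: "wdeg w m = s" if "m \<in> Poly_Mapping.keys P" for m using that by (simp add: P_def keys_part)
  have kQ: "wdeg w m = t" if "m \<in> Poly_Mapping.keys Q" for m using that by (simp add: Q_def keys_part)
  have pq: "p * q = P * Q + (P * q' + p' * Q + p' * q')"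
    by (simp add: p'_def q'_def algebra_simps)
  have 1: "part w (s + t) (P * Q) = P * Q"
    by (rule part_self) (metis kP kQ keys_mult_wdeg)
  have 2: "part w (s + t) (P * q') = 0"
    by (rule part_none) (metis kP kq' keys_mult_wdeg nat_add_left_cancel_less less_irrefl)
  have 3: "part w (s + t) (p' * Q) = 0"
    by (rule part_none) (metis kp' kQ keys_mult_wdeg add_less_mono1 less_irrefl)
  have 4: "part w (s + t) (p' * q') = 0"
    by (rule part_none) (metis kp' kq' keys_mult_wdeg add_less_mono less_irrefl)
  show ?thesis unfolding pq part_add 1 2 3 4 by (simp add: P_def Q_def)
qed

definition wtop :: "('v::finite \<Rightarrow> nat) \<Rightarrow> 'v rpoly \<Rightarrow> nat" where
  "wtop w p = Max (wdeg w ` Poly_Mapping.keys p)"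

lemma wtop_ge: "m \<in> Poly_Mapping.keys p \<Longrightarrow> wdeg w m \<le> wtop w p"
  unfolding wtop_def by (rule Max_ge) auto

lemma wtop_attained: "p \<noteq> 0 \<Longrightarrow> \<exists>m\<in>Poly_Mapping.keys p. wdeg w m = wtop w p"
proof -
  assume "p \<noteq> 0"
  then have "Poly_Mapping.keys p \<noteq> {}" by simp
  then have "wtop w p \<in> wdeg w ` Poly_Mapping.keys p" unfolding wtop_def by (intro Max_in) auto
  then show ?thesis by auto
qed

lemma wtop_le: "p \<noteq> 0 \<Longrightarrow> (\<And>m. m \<in> Poly_Mapping.keys p \<Longrightarrow> wdeg w m \<le> k) \<Longrightarrow> wtop w p \<le> k"
  using wtop_attained by metis

lemma part_top_nz: "p \<noteq> 0 \<Longrightarrow> part w (wtop w p) p \<noteq> 0"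
  using wtop_attained[of p w] by (auto simp: keys_part simp flip: keys_eq_empty)

lemma single_keys:
  fixes p :: "'v rpoly"
  assumes "Poly_Mapping.keys p = {m}"
  shows "p = Poly_Mapping.single m (Poly_Mapping.lookup p m)"
  by (rule poly_mapping_eqI) (use assms in \<open>auto simp: lookup_single when_def in_keys_iff\<close>)

lemma no_zero_div_aux:
  fixes p q :: "'v::finite rpoly"
  shows "card (Poly_Mapping.keys p) + card (Poly_Mapping.keys q) = n \<Longrightarrow> p \<noteq> 0 \<Longrightarrow> q \<noteq> 0 \<Longrightarrow> p * q \<noteq> 0"
proof (induction n arbitrary: p q rule: less_induct)
  case (less n)
  show ?case
  proof (cases "\<exists>v. (\<exists>m1\<in>Poly_Mapping.keys p. \<exists>m2\<in>Poly_Mapping.keys p. Poly_Mapping.lookup m1 v \<noteq> Poly_Mapping.lookup m2 v)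
                 \<or> (\<exists>m1\<in>Poly_Mapping.keys q. \<exists>m2\<in>Poly_Mapping.keys q. Poly_Mapping.lookup m1 v \<noteq> Poly_Mapping.lookup m2 v)")
    case True
    then obtain v where v: "(\<exists>m1\<in>Poly_Mapping.keys p. \<exists>m2\<in>Poly_Mapping.keys p. Poly_Mapping.lookup m1 v \<noteq> Poly_Mapping.lookup m2 v)
                 \<or> (\<exists>m1\<in>Poly_Mapping.keys q. \<exists>m2\<in>Poly_Mapping.keys q. Poly_Mapping.lookup m1 v \<noteq> Poly_Mapping.lookup m2 v)"
      by blast
    define w where "w = (\<lambda>u. if u = v then 1 else 0 :: nat)"
    have wd: "wdeg w m = Poly_Mapping.lookup m v" for m
    proof -
      have "(\<Sum>u\<in>UNIV. w u * Poly_Mapping.lookup m u) = (\<Sum>u\<in>UNIV. if u = v then Poly_Mapping.lookup m u else 0)"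
        by (intro sum.cong refl) (simp add: w_def)
      then show ?thesis by (simp add: wdeg_def)
    qed
    define s where "s = wtop w p"
    define t where "t = wtop w q"
    define P where "P = part w s p"
    define Q where "Q = part w t q"
    have P0: "P \<noteq> 0" using less.prems by (simp add: P_def s_def part_top_nz)
    have Q0: "Q \<noteq> 0" using less.prems by (simp add: Q_def t_def part_top_nz)
    have sub: "Poly_Mapping.keys P \<subseteq> Poly_Mapping.keys p" "Poly_Mapping.keys Q \<subseteq> Poly_Mapping.keys q"
      by (auto simp: P_def Q_def keys_part)
    have le1: "card (Poly_Mapping.keys P) \<le> card (Poly_Mapping.keys p)"
      and le2: "card (Poly_Mapping.keys Q) \<le> card (Poly_Mapping.keys q)"
      using sub by (auto intro: card_mono)
    have strict: "card (Poly_Mapping.keys P) < card (Poly_Mapping.keys p) \<or> card (Poly_Mapping.keys Q) < card (Poly_Mapping.keys q)"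
      using v
    proof
      assume "\<exists>m1\<in>Poly_Mapping.keys p. \<exists>m2\<in>Poly_Mapping.keys p. Poly_Mapping.lookup m1 v \<noteq> Poly_Mapping.lookup m2 v"
      then obtain m1 m2 where m: "m1 \<in> Poly_Mapping.keys p" "m2 \<in> Poly_Mapping.keys p" "Poly_Mapping.lookup m1 v \<noteq> Poly_Mapping.lookup m2 v" by blast
      have "m1 \<notin> Poly_Mapping.keys P \<or> m2 \<notin> Poly_Mapping.keys P"
        using m by (auto simp: P_def keys_part wd)
      then have "Poly_Mapping.keys P \<subset> Poly_Mapping.keys p" using sub m by blast
      then show ?thesis by (simp add: psubset_card_mono)
    next
      assume "\<exists>m1\<in>Poly_Mapping.keys q. \<exists>m2\<in>Poly_Mapping.keys q. Poly_Mapping.lookup m1 v \<noteq> Poly_Mapping.lookup m2 v"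
      then obtain m1 m2 where m: "m1 \<in> Poly_Mapping.keys q" "m2 \<in> Poly_Mapping.keys q" "Poly_Mapping.lookup m1 v \<noteq> Poly_Mapping.lookup m2 v" by blast
      have "m1 \<notin> Poly_Mapping.keys Q \<or> m2 \<notin> Poly_Mapping.keys Q"
        using m by (auto simp: Q_def keys_part wd)
      then have "Poly_Mapping.keys Q \<subset> Poly_Mapping.keys q" using sub m by blast
      then show ?thesis by (simp add: psubset_card_mono)
    qed
    have "P * Q \<noteq> 0"
      by (rule less.IH[OF _ refl P0 Q0]) (use le1 le2 strict less.prems(1) in linarith)
    moreover have "part w (s + t) (p * q) = P * Q"
      unfolding P_def Q_def by (rule part_mult_top) (auto simp: s_def t_def wtop_ge)
    ultimately show ?thesis by (metis part_none keys_zero empty_iff)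
  next
    case False
    have sing: "\<exists>m. Poly_Mapping.keys r = {m}" if nz: "r \<noteq> 0" and un:
      "\<forall>v. \<forall>m1\<in>Poly_Mapping.keys r. \<forall>m2\<in>Poly_Mapping.keys r. Poly_Mapping.lookup m1 v = Poly_Mapping.lookup m2 v"
      for r :: "'v rpoly"
    proof -
      obtain m where m: "m \<in> Poly_Mapping.keys r" using nz by (metis all_not_in_conv keys_eq_empty)
      have "m' = m" if "m' \<in> Poly_Mapping.keys r" for m'
        by (rule poly_mapping_eqI) (use that m un in blast)
      then show ?thesis using m by blast
    qed
    obtain a where a: "Poly_Mapping.keys p = {a}" using sing[of p] False less.prems by blast
    obtain b where b: "Poly_Mapping.keys q = {b}" using sing[of q] False less.prems by blast
    have "p * q = Poly_Mapping.single (a + b) (Poly_Mapping.lookup p a * Poly_Mapping.lookup q b)"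
      by (subst single_keys[OF a], subst single_keys[OF b]) (simp add: mult_single)
    moreover have "Poly_Mapping.lookup p a \<noteq> 0" "Poly_Mapping.lookup q b \<noteq> 0"
      using a b by (auto simp: in_keys_iff)
    ultimately show ?thesis by (metis mult_eq_0_iff single_zero lookup_single_eq)
  qed
qed

lemma no_zero_div: "(p::'v::finite rpoly) \<noteq> 0 \<Longrightarrow> q \<noteq> 0 \<Longrightarrow> p * q \<noteq> 0"
  using no_zero_div_aux by blast

lemma wtop_mult:
  fixes p q :: "'v::finite rpoly"
  assumes "p \<noteq> 0" "q \<noteq> 0"
  shows "wtop w (p * q) = wtop w p + wtop w q"
proof (rule antisym)
  show "wtop w (p * q) \<le> wtop w p + wtop w q"
    by (rule wtop_le[OF no_zero_div[OF assms]]) (metis keys_mult_wdeg wtop_ge add_mono)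
next
  have "part w (wtop w p + wtop w q) (p * q) = part w (wtop w p) p * part w (wtop w q) q"
    by (rule part_mult_top) (auto simp: wtop_ge)
  also have "\<dots> \<noteq> 0" using assms by (simp add: no_zero_div part_top_nz)
  finally obtain m where "m \<in> Poly_Mapping.keys (part w (wtop w p + wtop w q) (p * q))"
    by (metis all_not_in_conv keys_eq_empty)
  then show "wtop w p + wtop w q \<le> wtop w (p * q)"
    by (auto simp: keys_part intro: wtop_ge[of m, THEN order.trans[rotated]] dest: wtop_ge[of _ _ w])
qed

lemma wtop_mono: "(p::'v::finite rpoly) \<noteq> 0 \<Longrightarrow> (\<And>v. w v \<le> w' v) \<Longrightarrow> wtop w p \<le> wtop w' p"
proof -
  assume "p \<noteq> 0" and le: "\<And>v. w v \<le> w' v"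
  then obtain m where m: "m \<in> Poly_Mapping.keys p" "wdeg w m = wtop w p" using wtop_attained by blast
  have "wdeg w m \<le> wdeg w' m" unfolding wdeg_def by (intro sum_mono mult_right_mono le) auto
  then show ?thesis using m wtop_ge[OF m(1), of w'] by linarith
qed

definition monp :: "('n::finite \<Rightarrow> 'n) \<Rightarrow> ('n \<times> 'n) \<Rightarrow>\<^sub>0 nat" where
  "monp p = (\<Sum>i\<in>UNIV. Poly_Mapping.single (i, p i) 1)"

lemma lookup_monp: "Poly_Mapping.lookup (monp p) (i, j) = (if p i = j then 1 else 0)"
proof -
  have "Poly_Mapping.lookup (monp p) (i, j) = (\<Sum>k\<in>UNIV. if k = i \<and> p k = j then 1 else 0)"
    unfolding monp_def lookup_sum lookup_single by (intro sum.cong refl) (auto simp: when_def)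
  also have "\<dots> = (\<Sum>k\<in>UNIV. if k = i then (if p i = j then 1 else 0) else 0)"
    by (intro sum.cong refl) auto
  also have "\<dots> = (if p i = j then 1 else 0)" by simp
  finally show ?thesis .
qed

lemma monp_inj: "monp p = monp q \<Longrightarrow> p = q"
proof (rule ext)
  fix i assume "monp p = monp q"
  then have "Poly_Mapping.lookup (monp p) (i, p i) = Poly_Mapping.lookup (monp q) (i, p i)" by simp
  then show "p i = q i" by (simp add: lookup_monp split: if_splits)
qed

lemma prod_Var: "(\<Prod>i\<in>A. Var (i, p i)) = Poly_Mapping.single (\<Sum>i\<in>A. Poly_Mapping.single (i, p i) 1) 1"
  by (induction A rule: infinite_finite_induct) (auto simp: Var_def mult_single)

lemma Psi_expand: "(Psi :: ('n::finite \<times> 'n) rpoly) =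
   (\<Sum>p\<in>{p. p permutes (UNIV :: 'n set)}. Poly_Mapping.single (monp p) (of_int (sign p)))"
  unfolding Psi_def det_def
proof (intro sum.cong refl)
  fix p :: "'n \<Rightarrow> 'n"
  have "(\<Prod>i\<in>UNIV. ((\<chi> i j. Var (i, j)) :: (('n \<times> 'n) rpoly)^'n^'n) $ i $ p i) = Poly_Mapping.single (monp p) 1"
    by (simp add: prod_Var monp_def)
  then show "of_int (sign p) * (\<Prod>i\<in>UNIV. ((\<chi> i j. Var (i, j)) :: (('n \<times> 'n) rpoly)^'n^'n) $ i $ p i) =
      Poly_Mapping.single (monp p) (of_int (sign p))"
    by (simp flip: single_of_int add: mult_single)
qed

lemma lookup_Psi_monp:
  assumes q: "q permutes (UNIV :: 'n::finite set)"
  shows "Poly_Mapping.lookup (Psi :: ('n \<times> 'n) rpoly) (monp q) = of_int (sign q)"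
proof -
  have "Poly_Mapping.lookup (Psi :: ('n \<times> 'n) rpoly) (monp q) =
     (\<Sum>p\<in>{p. p permutes (UNIV :: 'n set)}. if p = q then of_int (sign q) else 0)"
    unfolding Psi_expand lookup_sum lookup_single
    by (intro sum.cong refl) (auto simp: when_def dest: monp_inj)
  also have "\<dots> = of_int (sign q)" using q by simp
  finally show ?thesis .
qed

lemma keys_Psi: "Poly_Mapping.keys (Psi :: ('n::finite \<times> 'n) rpoly) = monp ` {p. p permutes (UNIV :: 'n set)}"
proof
  show "Poly_Mapping.keys (Psi :: ('n \<times> 'n) rpoly) \<subseteq> monp ` {p. p permutes UNIV}"
    unfolding Psi_expand using keys_sum by (fastforce split: if_splits)
  show "monp ` {p. p permutes UNIV} \<subseteq> Poly_Mapping.keys (Psi :: ('n \<times> 'n) rpoly)"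
    by (auto simp: in_keys_iff lookup_Psi_monp sign_nz)
qed

lemma Psi_nz: "(Psi :: ('n::finite \<times> 'n) rpoly) \<noteq> 0"
proof -
  have "monp id \<in> Poly_Mapping.keys (Psi :: ('n \<times> 'n) rpoly)"
    unfolding keys_Psi by (auto intro: permutes_id)
  then show ?thesis by auto
qed

lemma mdeg_monp: "mdeg (monp (p :: 'n::finite \<Rightarrow> 'n)) = CARD('n)"
proof -
  have "(\<Sum>i\<in>UNIV. \<Sum>j\<in>UNIV. Poly_Mapping.lookup (monp p) (i, j)) =
     (\<Sum>(i, j)\<in>(UNIV :: 'n set) \<times> UNIV. Poly_Mapping.lookup (monp p) (i, j))"
    by (rule sum.cartesian_product)
  also have "\<dots> = mdeg (monp p)"
    unfolding mdeg_def UNIV_Times_UNIV by (simp add: case_prod_beta)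
  finally have 1: "mdeg (monp p) = (\<Sum>i\<in>UNIV. \<Sum>j\<in>UNIV. Poly_Mapping.lookup (monp p) (i, j))" by simp
  have "(\<Sum>i\<in>UNIV. \<Sum>j\<in>UNIV. Poly_Mapping.lookup (monp p) (i, j)) = (\<Sum>i\<in>(UNIV :: 'n set). 1)"
    by (intro sum.cong refl) (simp add: lookup_monp)
  then show ?thesis using 1 by simp
qed

lemma Psi_homog: "homogeneous_of_degree CARD('n) (Psi :: ('n::finite \<times> 'n) rpoly)"
  unfolding homogeneous_of_degree_def using Psi_nz by (auto simp: keys_Psi mdeg_monp)

definition ew :: "'v \<Rightarrow> 'v \<Rightarrow> nat" where "ew v = (\<lambda>u. if u = v then 1 else 0)"
definition ew2 :: "'v \<Rightarrow> 'v \<Rightarrow> 'v \<Rightarrow> nat" where "ew2 v w = (\<lambda>u. if u = v \<or> u = w then 1 else 0)"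

lemma wdeg_ew: "wdeg (ew v) m = Poly_Mapping.lookup m v"
proof -
  have "(\<Sum>u\<in>UNIV. ew v u * Poly_Mapping.lookup m u) = (\<Sum>u\<in>UNIV. if u = v then Poly_Mapping.lookup m u else 0)"
    by (intro sum.cong refl) (simp add: ew_def)
  then show ?thesis by (simp add: wdeg_def)
qed

lemma wdeg_ew2: "v \<noteq> w \<Longrightarrow> wdeg (ew2 v w) m = Poly_Mapping.lookup m v + Poly_Mapping.lookup m w"
proof -
  assume vw: "v \<noteq> w"
  have "(\<Sum>u\<in>UNIV. ew2 v w u * Poly_Mapping.lookup m u) =
     (\<Sum>u\<in>UNIV. (if u = v then Poly_Mapping.lookup m u else 0) + (if u = w then Poly_Mapping.lookup m u else 0))"
    by (intro sum.cong refl) (use vw in \<open>auto simp: ew2_def\<close>)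
  then show ?thesis by (simp add: wdeg_def sum.distrib)
qed

lemma wtop_ew_Psi: "wtop (ew (i, j)) (Psi :: ('n::finite \<times> 'n) rpoly) = 1"
proof (rule antisym)
  show "wtop (ew (i, j)) (Psi :: ('n \<times> 'n) rpoly) \<le> 1"
    by (rule wtop_le[OF Psi_nz]) (auto simp: keys_Psi wdeg_ew lookup_monp)
  have "monp (Transposition.transpose i j) \<in> Poly_Mapping.keys (Psi :: ('n \<times> 'n) rpoly)"
    unfolding keys_Psi by (auto intro: permutes_swap_id)
  from wtop_ge[OF this, of "ew (i, j)"] show "1 \<le> wtop (ew (i, j)) (Psi :: ('n \<times> 'n) rpoly)"
    by (simp add: wdeg_ew lookup_monp)
qed

lemma wtop_ew2_row: "j \<noteq> l \<Longrightarrow> wtop (ew2 (i, j) (i, l)) (Psi :: ('n::finite \<times> 'n) rpoly) \<le> 1"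
  by (rule wtop_le[OF Psi_nz]) (auto simp: keys_Psi wdeg_ew2 lookup_monp)

lemma wtop_ew2_col: "i \<noteq> k \<Longrightarrow> wtop (ew2 (i, j) (k, j)) (Psi :: ('n::finite \<times> 'n) rpoly) \<le> 1"
proof (rule wtop_le[OF Psi_nz])
  fix m assume ik: "i \<noteq> k" and "m \<in> Poly_Mapping.keys (Psi :: ('n \<times> 'n) rpoly)"
  then obtain p where p: "p permutes UNIV" "m = monp p" by (auto simp: keys_Psi)
  have "\<not> (p i = j \<and> p k = j)" using p(1) ik by (metis permutes_inj injD)
  then show "wdeg (ew2 (i, j) (k, j)) m \<le> 1" using ik by (auto simp: p wdeg_ew2 lookup_monp)
qed

lemma conflict:
  fixes f g :: "('n::finite \<times> 'n) rpoly"
  assumes fg: "Psi = f * g" and vw: "v \<noteq> w" and le: "wtop (ew2 v w) (Psi :: ('n \<times> 'n) rpoly) \<le> 1"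
    and f1: "wtop (ew v) f = 1" and g1: "wtop (ew w) g = 1"
  shows False
proof -
  have f0: "f \<noteq> 0" and g0: "g \<noteq> 0" using Psi_nz fg by auto
  have "wtop (ew v) f \<le> wtop (ew2 v w) f" by (rule wtop_mono[OF f0]) (simp add: ew_def ew2_def)
  moreover have "wtop (ew w) g \<le> wtop (ew2 v w) g" by (rule wtop_mono[OF g0]) (simp add: ew_def ew2_def)
  moreover have "wtop (ew2 v w) Psi = wtop (ew2 v w) f + wtop (ew2 v w) g"
    unfolding fg by (rule wtop_mult[OF f0 g0])
  ultimately show False using le f1 g1 by linarith
qed

lemma spread:
  fixes f g :: "('n::finite \<times> 'n) rpoly"
  assumes fg: "Psi = f * g" and f1: "wtop (ew (i0, i0)) f = 1"
  shows "g dvd 1"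
proof -
  have f0: "f \<noteq> 0" and g0: "g \<noteq> 0" using Psi_nz fg by auto
  have sum1: "wtop (ew v) f + wtop (ew v) g = 1" for v
    using wtop_mult[OF f0 g0, of "ew v"] wtop_ew_Psi[of "fst v" "snd v"] fg by simp
  have row: "wtop (ew (i0, j)) f = 1" for j
  proof (cases "j = i0")
    case False
    show ?thesis
    proof (rule ccontr)
      assume "wtop (ew (i0, j)) f \<noteq> 1"
      then have "wtop (ew (i0, j)) g = 1" using sum1[of "(i0, j)"] by linarith
      then show False using conflict[OF fg _ wtop_ew2_row[where i=i0 and j=i0 and l=j] f1] False by auto
    qed
  qed (use f1 in simp)
  have all: "wtop (ew (i, j)) f = 1" for i j
  proof (cases "i = i0")
    case False
    show ?thesis
    proof (rule ccontr)
      assume "wtop (ew (i, j)) f \<noteq> 1"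
      then have "wtop (ew (i, j)) g = 1" using sum1[of "(i, j)"] by linarith
      then show False using conflict[OF fg _ wtop_ew2_col[where i=i0 and k=i and j=j] row[of j]] False by auto
    qed
  qed (use row in simp)
  have g00: "wtop (ew v) g = 0" for v using sum1[of v] all[of "fst v" "snd v"] by simp
  have "Poly_Mapping.keys g \<subseteq> {0}"
  proof
    fix m assume m: "m \<in> Poly_Mapping.keys g"
    have "Poly_Mapping.lookup m v = 0" for v using wtop_ge[OF m, of "ew v"] g00[of v] by (simp add: wdeg_ew)
    then have "m = 0" by (intro poly_mapping_eqI) simp
    then show "m \<in> {0}" by simp
  qed
  then have k: "Poly_Mapping.keys g = {0}" using g0 by (metis keys_eq_empty subset_singletonD)
  define c where "c = Poly_Mapping.lookup g 0"
  have c0: "c \<noteq> 0" using k by (auto simp: c_def in_keys_iff)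
  have gc: "g = Poly_Mapping.single 0 c" unfolding c_def by (rule single_keys[OF k])
  have "1 = g * Poly_Mapping.single 0 (1 / c)" using c0 by (simp add: gc mult_single)
  then show ?thesis by (rule dvdI)
qed

lemma Psi_irreducible: "irreducible (Psi :: ('n::finite \<times> 'n) rpoly)"
proof (unfold irreducible_def, intro conjI allI impI)
  show "(Psi :: ('n \<times> 'n) rpoly) \<noteq> 0" by (rule Psi_nz)
  obtain i0 :: 'n where True by blast
  show "\<not> (Psi :: ('n \<times> 'n) rpoly) dvd 1"
  proof
    assume "(Psi :: ('n \<times> 'n) rpoly) dvd 1"
    then obtain k where k: "1 = (Psi :: ('n \<times> 'n) rpoly) * k" by (rule dvdE)
    then have k0: "k \<noteq> 0" by auto
    have "wtop (ew (i0, i0)) (1 :: ('n \<times> 'n) rpoly) = 0"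
      by (simp add: wtop_def wdeg_ew)
    moreover have "wtop (ew (i0, i0)) (Psi * k) = wtop (ew (i0, i0)) Psi + wtop (ew (i0, i0)) k"
      by (rule wtop_mult[OF Psi_nz k0])
    ultimately show False using k wtop_ew_Psi[of i0 i0] by (metis add_is_0 zero_neq_one)
  qed
  fix a b :: "('n \<times> 'n) rpoly"
  assume ab: "Psi = a * b"
  have a0: "a \<noteq> 0" and b0: "b \<noteq> 0" using Psi_nz ab by auto
  have "wtop (ew (i0, i0)) a + wtop (ew (i0, i0)) b = 1"
    using wtop_mult[OF a0 b0, of "ew (i0, i0)"] wtop_ew_Psi[of i0 i0] ab by simp
  then consider "wtop (ew (i0, i0)) a = 1" | "wtop (ew (i0, i0)) b = 1" by linarith
  then show "a dvd 1 \<or> b dvd 1"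
  proof cases
    case 1 then show ?thesis using spread[OF ab] by blast
  next
    case 2
    have "Psi = b * a" using ab by (simp add: mult.commute)
    then show ?thesis using spread[OF _ 2] by blast
  qed
qed

theorem theorem3:
  shows "irreducible (Psi :: ('n::finite \<times> 'n) rpoly)
         \<and> homogeneous_of_degree CARD('n) (Psi :: ('n \<times> 'n) rpoly)
         \<and> (Psi :: ('n \<times> 'n) rpoly) dvd Lop Psi"
  using Psi_irreducible Psi_homog Lop_Psi_dvd by blast

end
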